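(* Let $k\ge 0$ and let $A$ be a real symmetric matrix indexed by $\mathcal{F}'_k$. Then there exists an isolate-indifferent, reflection positive graph parameter $f$ with $A_{F,G}=f(FG)$ for all $F,G\in\mathcal{F}'_k$ if and only if for every $m\ge k$ there exists a positive semidefinite matrix $B$ indexed by $\mathcal{F}'_m$ such that $B_{F_1,G_1}=B_{F_2,G_2}$ whenever $F_1G_1\simeq F_2G_2$, and $B_{F^{+m},G^{+m}}=A_{F,G}$ for all $F,G\in\mathcal{F}'_k$.
   Context: All graphs are finite and simple. $\mathcal{F}'_k$ denotes the set of flat $k$-labeled graphs, i.e. graphs on node set $[k]=\{1,\dots,k\}$ with node $i$ labeled $i$. For $F,G\in\mathcal{F}'_k$, $FG$ is the graph on $[k]$ with edge set $E(F)\cup E(G)$. For $F\in\mathcal{F}'_k$ and $m\ge k$, $F^{+m}\in\mathcal{F}'_m$ is obtained by adding isolated nodes $k+1,\dots,m$. For graphs $F,G$, $F\simeq G$ means they become isomorphic after deleting isolated nodes. A graph parameter is a real function on isomorphism types of graphs; it is isolate-indifferent if $f(G)=f(G')$ whenever $G\simeq G'$. A $k$-labeled graph is a graph with $k$ nodes labeled $1,\dots,k$ (other nodes unlabeled); the product of two $k$-labeled graphs is their disjoint union with equally labeled nodes identified and multiple edges merged. $f$ is reflection positive if for every $k$ the matrix indexed by $k$-labeled graphs with entries $f(F_1F_2)$ is positive semidefinite (all finite principal submatrices PSD). *)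

theory Defs
  imports Complex_Main
begin

text \<open>A graph is a pair (V, E) of a node set V of naturals and an edge set E,
  each edge being a 2-element subset of V. Finite simple graphs are the well-formed ones.\<close>
type_synonym graph = "nat set \<times> nat set set"

definition wf_graph :: "graph \<Rightarrow> bool" where
  "wf_graph G \<longleftrightarrow> finite (fst G) \<and> (\<forall>e\<in>snd G. e \<subseteq> fst G \<and> card e = 2)"

definition graph_iso :: "graph \<Rightarrow> graph \<Rightarrow> bool" where
  "graph_iso G H \<longleftrightarrow> (\<exists>\<phi>. bij_betw \<phi> (fst G) (fst H) \<and> (image \<phi>) ` snd G = snd H)"

definition del_isolated :: "graph \<Rightarrow> graph" where
  "del_isolated G = (\<Union>(snd G), snd G)"

definition isolate_equiv :: "graph \<Rightarrow> graph \<Rightarrow> bool" where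
  "isolate_equiv G H \<longleftrightarrow> graph_iso (del_isolated G) (del_isolated H)"

definition graph_parameter :: "(graph \<Rightarrow> real) \<Rightarrow> bool" where
  "graph_parameter f \<longleftrightarrow> (\<forall>G H. wf_graph G \<and> wf_graph H \<and> graph_iso G H \<longrightarrow> f G = f H)"

definition isolate_indifferent :: "(graph \<Rightarrow> real) \<Rightarrow> bool" where
  "isolate_indifferent f \<longleftrightarrow> (\<forall>G H. wf_graph G \<and> wf_graph H \<and> isolate_equiv G H \<longrightarrow> f G = f H)"

text \<open>k-labeled graph: node i carries label i for 1 \<le> i \<le> k; other nodes are unlabeled.\<close>
definition klabeled :: "nat \<Rightarrow> graph \<Rightarrow> bool" where
  "klabeled k G \<longleftrightarrow> wf_graph G \<and> {1..k} \<subseteq> fst G"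

text \<open>Product of k-labeled graphs: disjoint union (unlabeled nodes of the two factors are
  renamed apart), equally labeled nodes identified, multiple edges merged.\<close>
definition lab_ren1 :: "nat \<Rightarrow> nat \<Rightarrow> nat" where
  "lab_ren1 k v = (if v \<in> {1..k} then v else k + 1 + 2 * v)"
definition lab_ren2 :: "nat \<Rightarrow> nat \<Rightarrow> nat" where
  "lab_ren2 k v = (if v \<in> {1..k} then v else k + 2 + 2 * v)"

definition klab_prod :: "nat \<Rightarrow> graph \<Rightarrow> graph \<Rightarrow> graph" where
  "klab_prod k F G =
     (lab_ren1 k ` fst F \<union> lab_ren2 k ` fst G,
      (image (lab_ren1 k)) ` snd F \<union> (image (lab_ren2 k)) ` snd G)"

definition psd_on :: "'a set \<Rightarrow> ('a \<Rightarrow> 'a \<Rightarrow> real) \<Rightarrow> bool" where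
  "psd_on S M \<longleftrightarrow> (\<forall>x\<in>S. \<forall>y\<in>S. M x y = M y x) \<and>
     (\<forall>T c. finite T \<and> T \<subseteq> S \<longrightarrow> 0 \<le> (\<Sum>x\<in>T. \<Sum>y\<in>T. c x * c y * M x y))"

definition reflection_positive :: "(graph \<Rightarrow> real) \<Rightarrow> bool" where
  "reflection_positive f \<longleftrightarrow>
     (\<forall>k. psd_on {F. klabeled k F} (\<lambda>F G. f (klab_prod k F G)))"

definition flat_graphs :: "nat \<Rightarrow> graph set" where
  "flat_graphs k = {G. fst G = {1..k} \<and> wf_graph G}"

definition flat_prod :: "graph \<Rightarrow> graph \<Rightarrow> graph" where
  "flat_prod F G = (fst F, snd F \<union> snd G)"

definition add_isolated :: "nat \<Rightarrow> graph \<Rightarrow> graph" where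
  "add_isolated m F = ({1..m}, snd F)"

end

theory Submission imports Defs "HOL-Analysis.Analysis" begin


lemma ie_snd: "isolate_equiv G H \<longleftrightarrow> isolate_equiv (X, snd G) (Y, snd H)"
  by (simp add: isolate_equiv_def del_isolated_def)

lemma ie_refl: "isolate_equiv G G"
  unfolding isolate_equiv_def graph_iso_def by (rule exI[of _ id]) (auto simp: bij_betw_def)

lemma ie_sym: assumes "isolate_equiv G H" shows "isolate_equiv H G"
proof -
  from assms obtain \<phi> where b: "bij_betw \<phi> (\<Union>(snd G)) (\<Union>(snd H))" and e: "image \<phi> ` snd G = snd H"
    by (auto simp: isolate_equiv_def graph_iso_def del_isolated_def)
  let ?p = "inv_into (\<Union>(snd G)) \<phi>"
  have "bij_betw ?p (\<Union>(snd H)) (\<Union>(snd G))" using b by (rule bij_betw_inv_into)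
  moreover have "image ?p ` snd H = snd G"
  proof -
    have "image ?p ` snd H = (\<lambda>x. ?p ` \<phi> ` x) ` snd G" unfolding e[symmetric] image_image ..
    also have "\<dots> = snd G"
    proof -
      have "\<And>x. x \<in> snd G \<Longrightarrow> ?p ` \<phi> ` x = x"
        using b by (intro inv_into_image_cancel) (auto simp: bij_betw_def)
      then show ?thesis by simp
    qed
    finally show ?thesis .
  qed
  ultimately show ?thesis by (auto simp: isolate_equiv_def graph_iso_def del_isolated_def)
qed

lemma ie_trans: assumes "isolate_equiv G H" "isolate_equiv H K" shows "isolate_equiv G K"
proof -
  from assms obtain \<phi> \<psi> where b: "bij_betw \<phi> (\<Union>(snd G)) (\<Union>(snd H))" and e: "image \<phi> ` snd G = snd H"
    and b2: "bij_betw \<psi> (\<Union>(snd H)) (\<Union>(snd K))" and e2: "image \<psi> ` snd H = snd K"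
    by (auto simp: isolate_equiv_def graph_iso_def del_isolated_def)
  have "bij_betw (\<psi> \<circ> \<phi>) (\<Union>(snd G)) (\<Union>(snd K))" using b b2 by (rule bij_betw_trans)
  moreover have "image (\<psi> \<circ> \<phi>) ` snd G = snd K"
    unfolding e2[symmetric] e[symmetric] by (simp add: image_image image_comp)
  ultimately show ?thesis unfolding isolate_equiv_def graph_iso_def del_isolated_def by (intro exI[of _ "\<psi> \<circ> \<phi>"]) simp
qed

lemma ie_map: assumes "inj_on h (\<Union>E)" shows "isolate_equiv (V, E) (W, image h ` E)"
proof -
  have "bij_betw h (\<Union>E) (\<Union>(image h ` E))" using assms by (auto simp: bij_betw_def)
  then show ?thesis by (auto simp: isolate_equiv_def graph_iso_def del_isolated_def)
qed

lemma iso_ie: assumes "wf_graph G" "graph_iso G H" shows "isolate_equiv G H"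
proof -
  from assms obtain \<phi> where b: "bij_betw \<phi> (fst G) (fst H)" and e: "image \<phi> ` snd G = snd H"
    by (auto simp: graph_iso_def)
  have "\<Union>(snd G) \<subseteq> fst G" using assms(1) by (auto simp: wf_graph_def)
  then have "inj_on \<phi> (\<Union>(snd G))" using b by (auto simp: bij_betw_def intro: inj_on_subset)
  then have "isolate_equiv (fst G, snd G) (fst H, image \<phi> ` snd G)" by (rule ie_map)
  then show ?thesis using e by simp
qed



definition fm :: "(graph \<Rightarrow> graph \<Rightarrow> real) \<Rightarrow> nat \<Rightarrow> graph \<Rightarrow> real" where
  "fm B m H = (if \<exists>X\<in>flat_graphs m. isolate_equiv X H
     then B (SOME X. X \<in> flat_graphs m \<and> isolate_equiv X H) (SOME X. X \<in> flat_graphs m \<and> isolate_equiv X H) else 0)"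

definition HBc :: "(graph \<Rightarrow> graph \<Rightarrow> real) \<Rightarrow> nat \<Rightarrow> bool" where
  "HBc B m \<longleftrightarrow> (\<forall>F1\<in>flat_graphs m. \<forall>G1\<in>flat_graphs m. \<forall>F2\<in>flat_graphs m. \<forall>G2\<in>flat_graphs m.
               isolate_equiv (flat_prod F1 G1) (flat_prod F2 G2) \<longrightarrow> B F1 G1 = B F2 G2)"

lemma flat_prod_flat: "X \<in> flat_graphs m \<Longrightarrow> Y \<in> flat_graphs m \<Longrightarrow> flat_prod X Y \<in> flat_graphs m"
  unfolding flat_graphs_def flat_prod_def wf_graph_def by (simp only: mem_Collect_eq fst_conv snd_conv) blast

lemma flat_prod_self: "flat_prod X X = X"
  by (simp add: flat_prod_def)

lemma fm_eq:
  assumes "HBc B m" "X \<in> flat_graphs m" "Y \<in> flat_graphs m" "isolate_equiv (flat_prod X Y) H"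
  shows "fm B m H = B X Y"
proof -
  have ex: "\<exists>X\<in>flat_graphs m. isolate_equiv X H" using assms flat_prod_flat by blast
  define W where "W = (SOME X. X \<in> flat_graphs m \<and> isolate_equiv X H)"
  have W: "W \<in> flat_graphs m" "isolate_equiv W H" using someI_ex[of "\<lambda>X. X \<in> flat_graphs m \<and> isolate_equiv X H"] ex
    unfolding W_def by auto
  have "isolate_equiv (flat_prod W W) (flat_prod X Y)"
    using W(2) assms(4) ie_sym ie_trans flat_prod_self by metis
  then have "B W W = B X Y" using assms(1-3) W(1) unfolding HBc_def by blast
  then show ?thesis using ex unfolding fm_def W_def by simp
qed

lemma fm_ie: assumes "isolate_equiv G H" shows "fm B m G = fm B m H"
proof -
  have "\<And>X. isolate_equiv X G \<longleftrightarrow> isolate_equiv X H" using assms ie_sym ie_trans by metis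
  then show ?thesis unfolding fm_def by simp
qed

lemma fm_cases: "fm B m H = 0 \<or> (\<exists>W\<in>flat_graphs m. fm B m H = B W W)"
proof (cases "\<exists>X\<in>flat_graphs m. isolate_equiv X H")
  case True
  then have "(SOME X. X \<in> flat_graphs m \<and> isolate_equiv X H) \<in> flat_graphs m"
    using someI_ex[of "\<lambda>X. X \<in> flat_graphs m \<and> isolate_equiv X H"] by auto
  then show ?thesis using True unfolding fm_def by auto
qed (simp add: fm_def)

lemma psd_reindex:
  assumes "psd_on S B" "finite I" "g ` I \<subseteq> S"
  shows "0 \<le> (\<Sum>x\<in>I. \<Sum>y\<in>I. c x * c y * B (g x) (g y))"
proof -
  define d where "d z = (\<Sum>x\<in>{x\<in>I. g x = z}. c x)" for z
  have inner: "(\<Sum>y\<in>I. c x * c y * B (g x) (g y)) = (\<Sum>w\<in>g ` I. c x * d w * B (g x) w)" for x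
  proof -
    have "(\<Sum>y\<in>I. c x * c y * B (g x) (g y)) = (\<Sum>w\<in>g ` I. \<Sum>y\<in>{y\<in>I. g y = w}. c x * c y * B (g x) (g y))"
      by (rule sum.image_gen[OF assms(2)])
    also have "\<dots> = (\<Sum>w\<in>g ` I. \<Sum>y\<in>{y\<in>I. g y = w}. c x * c y * B (g x) w)"
      by (intro sum.cong) auto
    also have "\<dots> = (\<Sum>w\<in>g ` I. c x * d w * B (g x) w)"
      by (simp add: d_def sum_distrib_left sum_distrib_right mult.assoc)
    finally show ?thesis .
  qed
  have "(\<Sum>x\<in>I. \<Sum>y\<in>I. c x * c y * B (g x) (g y)) = (\<Sum>x\<in>I. \<Sum>w\<in>g ` I. c x * d w * B (g x) w)"
    using inner by simp
  also have "\<dots> = (\<Sum>z\<in>g ` I. \<Sum>x\<in>{x\<in>I. g x = z}. \<Sum>w\<in>g ` I. c x * d w * B (g x) w)"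
    by (rule sum.image_gen[OF assms(2)])
  also have "\<dots> = (\<Sum>z\<in>g ` I. \<Sum>x\<in>{x\<in>I. g x = z}. \<Sum>w\<in>g ` I. c x * d w * B z w)"
    by (intro sum.cong) auto
  also have "\<dots> = (\<Sum>z\<in>g ` I. \<Sum>w\<in>g ` I. d z * d w * B z w)"
  proof (intro sum.cong refl)
    fix z
    show "(\<Sum>x\<in>{x\<in>I. g x = z}. \<Sum>w\<in>g ` I. c x * d w * B z w) = (\<Sum>w\<in>g ` I. d z * d w * B z w)"
      unfolding d_def by (subst sum.swap) (simp add: sum_distrib_right)
  qed
  also have "0 \<le> \<dots>" using assms by (auto simp: psd_on_def)
  finally show ?thesis .
qed



definition psi :: "nat \<Rightarrow> nat \<Rightarrow> nat \<Rightarrow> nat \<Rightarrow> nat" where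
  "psi j N s v = (if v \<in> {1..j} then v else j + 1 + s + N * v)"
definition Gs :: "nat \<Rightarrow> nat \<Rightarrow> nat \<Rightarrow> nat \<Rightarrow> graph \<Rightarrow> graph" where
  "Gs j N m s F = ({1..m}, image (psi j N s) ` snd F)"
definition rawU :: "graph \<Rightarrow> graph \<Rightarrow> graph" where
  "rawU F G = (fst F \<union> fst G, snd F \<union> snd G)"

lemma psi_inj: assumes "0 < N" shows "inj (psi j N s)"
  unfolding inj_def psi_def using assms by auto

lemma mod_cancel_aux: assumes "s < N" "t < N" "s + N * a = t + N * (b::nat)" shows "s = t"
proof -
  have "(s + N * a) mod N = s" using assms(1) by simp
  moreover have "(t + N * b) mod N = t" using assms(2) by simp
  ultimately show ?thesis using assms(3) by simp
qed

lemma psi_cross: assumes "s < N" "t < N" "s \<noteq> t" "psi j N s a = psi j N t b"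
  shows "a = b \<and> a \<in> {1..j}"
  using assms mod_cancel_aux[of s N t a b] unfolding psi_def by (auto split: if_splits)

lemma Gs_flat:
  assumes "klabeled j F" "\<forall>v\<in>fst F. v \<le> Mx" "s < N" "j + N + N*Mx \<le> m"
  shows "Gs j N m s F \<in> flat_graphs m"
proof -
  have N: "0 < N" using assms by auto
  have wf: "\<forall>e\<in>snd F. e \<subseteq> fst F \<and> card e = 2" using assms(1) by (auto simp: klabeled_def wf_graph_def)
  have rng: "psi j N s v \<in> {1..m}" if "v \<in> fst F" for v
  proof -
    have "v \<le> Mx" using assms(2) that by auto
    then have "N * v \<le> N * Mx" by simp
    then have "j + 1 + s + N * v \<le> m" using assms(3,4) by linarith
    then show ?thesis unfolding psi_def by auto
  qed
  have "card (psi j N s ` e) = 2" if "e \<in> snd F" for e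
    using wf that psi_inj[OF N] by (simp add: card_image inj_on_subset[of _ UNIV])
  moreover have "psi j N s ` e \<subseteq> {1..m}" if "e \<in> snd F" for e
    using wf that rng by blast
  ultimately show ?thesis unfolding Gs_def flat_graphs_def wf_graph_def by auto
qed

lemma slot_same: assumes "0 < N"
  shows "isolate_equiv (flat_prod (Gs j N m s F) (Gs j N m s G)) (rawU F G)"
proof -
  have "isolate_equiv (rawU F G) (fst (rawU F G), image (psi j N s) ` (snd F \<union> snd G))"
    unfolding rawU_def using psi_inj[OF assms] by (intro ie_map) (auto intro: inj_on_subset)
  then show ?thesis
    by (subst ie_snd) (rule ie_sym, subst (asm) ie_snd, simp add: Gs_def flat_prod_def image_Un)
qed

definition chi :: "nat \<Rightarrow> nat \<Rightarrow> nat \<Rightarrow> nat \<Rightarrow> nat \<Rightarrow> nat" where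
  "chi j N s t w = (if w \<in> {1..j} then w else if even (w - j - 1) then psi j N s ((w - j - 1) div 2)
      else psi j N t ((w - j - 2) div 2))"

lemma chi1: "chi j N s t (lab_ren1 j v) = psi j N s v"
  unfolding chi_def lab_ren1_def psi_def by auto
lemma chi2: "chi j N s t (lab_ren2 j v) = psi j N t v"
  unfolding chi_def lab_ren2_def psi_def by auto

lemma chi_inj: assumes "s < N" "t < N" "s \<noteq> t"
  shows "inj_on (chi j N s t) (range (lab_ren1 j) \<union> range (lab_ren2 j))"
proof (rule inj_onI)
  fix x y assume x: "x \<in> range (lab_ren1 j) \<union> range (lab_ren2 j)" and y: "y \<in> range (lab_ren1 j) \<union> range (lab_ren2 j)"
    and e: "chi j N s t x = chi j N s t y"
  have N: "0 < N" using assms by auto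
  have l1: "lab_ren1 j a = a" "lab_ren2 j a = a" if "a \<in> {1..j}" for a
    using that by (auto simp: lab_ren1_def lab_ren2_def)
  show "x = y"
  proof -
    { fix a b assume "x = lab_ren1 j a" "y = lab_ren1 j b"
      then have ?thesis using e chi1 psi_inj[OF N] by (metis injD) }
    moreover
    { fix a b assume "x = lab_ren2 j a" "y = lab_ren2 j b"
      then have ?thesis using e chi2 psi_inj[OF N] by (metis injD) }
    moreover
    { fix a b assume xa: "x = lab_ren1 j a" and yb: "y = lab_ren2 j b"
      then have "psi j N s a = psi j N t b" using e chi1 chi2 by metis
      then have "a = b \<and> a \<in> {1..j}" using psi_cross assms by blast
      then have ?thesis using xa yb l1 by metis }
    moreover
    { fix a b assume xa: "x = lab_ren2 j a" and yb: "y = lab_ren1 j b"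
      then have "psi j N s b = psi j N t a" using e chi1 chi2 by metis
      then have "b = a \<and> b \<in> {1..j}" using psi_cross assms by blast
      then have ?thesis using xa yb l1 by metis }
    ultimately show ?thesis using x y by blast
  qed
qed

lemma slot_diff: assumes "s < N" "t < N" "s \<noteq> t"
  shows "isolate_equiv (klab_prod j F G) (flat_prod (Gs j N m s F) (Gs j N m t G))"
proof -
  let ?E = "snd (klab_prod j F G)"
  have sub: "\<Union>?E \<subseteq> range (lab_ren1 j) \<union> range (lab_ren2 j)"
    unfolding klab_prod_def by auto
  have "isolate_equiv (fst (klab_prod j F G), ?E) (X, image (chi j N s t) ` ?E)" for X
    using chi_inj[OF assms] sub by (intro ie_map) (auto intro: inj_on_subset)
  moreover have c1: "chi j N s t \<circ> lab_ren1 j = psi j N s" and c2: "chi j N s t \<circ> lab_ren2 j = psi j N t"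
    by (auto simp: chi1 chi2)
  moreover have "image (chi j N s t) ` ?E = image (psi j N s) ` snd F \<union> image (psi j N t) ` snd G"
    unfolding klab_prod_def by (simp add: image_Un image_image chi1 chi2)
  ultimately show ?thesis
    by (simp add: Gs_def flat_prod_def)
qed



lemma count_sum: "(\<Sum>s<N. \<Sum>t<N. (if s = t then a else b)) = real N * a + real N * (real N - 1) * (b::real)"
proof -
  have "(\<Sum>t<N. (if s = t then a else b)) = a + (real N - 1) * b" if "s < N" for s
  proof -
    have "(\<Sum>t<N. (if s = t then a else b)) = (\<Sum>t<N. b + (if s = t then a - b else 0))"
      by (intro sum.cong) auto
    also have "\<dots> = real N * b + (a - b)" using that by (simp add: sum.distrib)
    finally show ?thesis by (simp add: algebra_simps)
  qed
  then have "(\<Sum>s<N. \<Sum>t<N. (if s = t then a else b)) = (\<Sum>s<N. a + (real N - 1) * b)" by simp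
  also have "\<dots> = real N * a + real N * (real N - 1) * b" by (simp add: algebra_simps)
  finally show ?thesis .
qed

lemma fm_rp:
  assumes psd: "psd_on (flat_graphs m) B" and hb: "HBc B m" and fin: "finite T"
    and T: "T \<subseteq> {F. klabeled j F}" and Mx: "\<forall>F\<in>T. \<forall>v\<in>fst F. v \<le> Mx" and N: "2 \<le> N"
    and m: "j + N + N*Mx \<le> m"
  shows "0 \<le> (real N - 1) * (\<Sum>F\<in>T. \<Sum>G\<in>T. c F * c G * fm B m (klab_prod j F G))
              + (\<Sum>F\<in>T. \<Sum>G\<in>T. c F * c G * fm B m (rawU F G))"
proof -
  define I where "I = T \<times> {..<N}"
  define g where "g = (\<lambda>(F,s). Gs j N m s F)"
  define cc where "cc = (\<lambda>(F::graph,s::nat). c F)"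
  have N0: "0 < N" using N by auto
  have gI: "g ` I \<subseteq> flat_graphs m"
  proof
    fix x assume "x \<in> g ` I"
    then obtain F s where "F \<in> T" "s < N" "x = Gs j N m s F" unfolding I_def g_def by auto
    then show "x \<in> flat_graphs m" using Gs_flat[of j F Mx s N m] T Mx m by auto
  qed
  have "0 \<le> (\<Sum>x\<in>I. \<Sum>y\<in>I. cc x * cc y * B (g x) (g y))"
    by (rule psd_reindex[OF psd _ gI]) (simp add: I_def fin)
  also have "\<dots> = (\<Sum>F\<in>T. \<Sum>s<N. \<Sum>G\<in>T. \<Sum>t<N. c F * c G * B (Gs j N m s F) (Gs j N m t G))"
    unfolding I_def by (simp add: sum.cartesian_product' g_def cc_def)
  also have "\<dots> = (\<Sum>F\<in>T. \<Sum>s<N. \<Sum>G\<in>T. \<Sum>t<N. c F * c G *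
        (if s = t then fm B m (rawU F G) else fm B m (klab_prod j F G)))"
  proof (intro sum.cong refl)
    fix F s G t assume F: "F \<in> T" and s: "s \<in> {..<N}" and G: "G \<in> T" and t: "t \<in> {..<N}"
    have fF: "Gs j N m s F \<in> flat_graphs m" "Gs j N m t G \<in> flat_graphs m"
      using Gs_flat[of j F Mx s N m] Gs_flat[of j G Mx t N m] T Mx m F G s t by auto
    show "c F * c G * B (Gs j N m s F) (Gs j N m t G) = c F * c G *
        (if s = t then fm B m (rawU F G) else fm B m (klab_prod j F G))"
    proof (cases "s = t")
      case True
      then have "isolate_equiv (flat_prod (Gs j N m s F) (Gs j N m t G)) (rawU F G)"
        using slot_same[OF N0, of j m s F G] by simp
      then show ?thesis using fm_eq[OF hb fF] True by simp
    next
      case False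
      then have "isolate_equiv (flat_prod (Gs j N m s F) (Gs j N m t G)) (klab_prod j F G)"
        using slot_diff[of s N t j F G m] s t ie_sym by auto
      then show ?thesis using fm_eq[OF hb fF] False by simp
    qed
  qed
  also have "\<dots> = (\<Sum>F\<in>T. \<Sum>G\<in>T. \<Sum>s<N. \<Sum>t<N. c F * c G *
        (if s = t then fm B m (rawU F G) else fm B m (klab_prod j F G)))"
    by (intro sum.cong refl) (rule sum.swap)
  also have "\<dots> = (\<Sum>F\<in>T. \<Sum>G\<in>T. c F * c G * (real N * fm B m (rawU F G) + real N * (real N - 1) * fm B m (klab_prod j F G)))"
  proof (intro sum.cong refl)
    fix F G
    have "(\<Sum>s<N. \<Sum>t<N. c F * c G * (if s = t then fm B m (rawU F G) else fm B m (klab_prod j F G)))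
        = c F * c G * (\<Sum>s<N. \<Sum>t<N. (if s = t then fm B m (rawU F G) else fm B m (klab_prod j F G)))"
      by (simp add: sum_distrib_left)
    then show "(\<Sum>s<N. \<Sum>t<N. c F * c G * (if s = t then fm B m (rawU F G) else fm B m (klab_prod j F G)))
        = c F * c G * (real N * fm B m (rawU F G) + real N * (real N - 1) * fm B m (klab_prod j F G))"
      by (simp add: count_sum)
  qed
  also have "\<dots> = real N * ((real N - 1) * (\<Sum>F\<in>T. \<Sum>G\<in>T. c F * c G * fm B m (klab_prod j F G))
              + (\<Sum>F\<in>T. \<Sum>G\<in>T. c F * c G * fm B m (rawU F G)))"
    by (simp add: algebra_simps sum_distrib_left sum.distrib sum_subtractf)
  finally show ?thesis using N0 by (simp add: zero_le_mult_iff)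
qed



lemma compact_box: "compact {f::graph \<Rightarrow> real. \<forall>x. f x \<in> {0..c}}"
proof -
  have "compactin (product_topology (\<lambda>_. euclidean) UNIV) (PiE UNIV (\<lambda>_::graph. {0..c::real}))"
    by (simp add: compactin_PiE)
  then have "compact (PiE UNIV (\<lambda>_::graph. {0..c::real}))"
    by (simp add: euclidean_product_topology)
  moreover have "PiE UNIV (\<lambda>_::graph. {0..c::real}) = {f. \<forall>x. f x \<in> {0..c}}"
    by (auto simp: PiE_UNIV_domain Pi_def)
  ultimately show ?thesis by simp
qed

lemma Q_nonneg: assumes "\<forall>N\<ge>2. 0 \<le> (real N - 1) * Q + (Q'::real)" shows "0 \<le> Q"
proof (rule ccontr)
  assume "\<not> 0 \<le> Q"
  then have q: "Q < 0" by simp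
  obtain n :: nat where n: "Q' / (- Q) < real n" using reals_Archimedean2 by blast
  have pq: "0 < -Q" using q by simp
  have "Q' < real n * (- Q)" using n pos_divide_less_eq[OF pq] by blast
  then have "(real (n+2) - 1) * Q + Q' < 0" using q by (simp add: algebra_simps)
  moreover have "0 \<le> (real (n+2) - 1) * Q + Q'" using assms[rule_format, of "n+2"] by linarith
  ultimately show False by simp
qed

lemma cont_eval: "continuous_on UNIV (\<lambda>f::graph \<Rightarrow> real. f x)"
  by simp

lemma closed_ii: "closed {f::graph \<Rightarrow> real. f G = f H}"
  by (intro closed_Collect_eq) simp_all

lemma closed_A: "closed {f::graph \<Rightarrow> real. f G = a}"
  by (intro closed_Collect_eq) simp_all

lemma closed_rp: "closed {f::graph \<Rightarrow> real. 0 \<le> (real N - 1) * (\<Sum>F\<in>T. \<Sum>G\<in>T. c F * c G * f (P F G))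
      + (\<Sum>F\<in>T. \<Sum>G\<in>T. c F * c G * f (R F G))}"
  by (intro closed_Collect_le continuous_intros) simp_all



definition Mxf :: "graph set \<Rightarrow> nat" where "Mxf T = Max (insert 0 (\<Union>(fst ` T)))"
definition bnd :: "nat \<Rightarrow> graph set \<Rightarrow> nat \<Rightarrow> nat" where "bnd j T N = j + N + N * Mxf T"

lemma Mxf_bound:
  assumes "finite T" "T \<subseteq> {F. klabeled j F}" "F \<in> T" "v \<in> fst F" shows "v \<le> Mxf T"
proof -
  have "\<forall>F\<in>T. finite (fst F)" using assms(2) by (auto simp: klabeled_def wf_graph_def)
  then have "finite (insert 0 (\<Union>(fst ` T)))" using assms(1) by auto
  then show ?thesis unfolding Mxf_def using assms(3,4) by (intro Max_ge) auto
qed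

definition Cons :: "nat \<Rightarrow> (graph \<Rightarrow> graph \<Rightarrow> real) \<Rightarrow> nat \<Rightarrow> (graph \<Rightarrow> real) set set" where
  "Cons k A m = {{f. f G = f H} | G H. isolate_equiv G H}
    \<union> {{f. f (flat_prod F G) = A F G} | F G. F \<in> flat_graphs k \<and> G \<in> flat_graphs k}
    \<union> {{f. 0 \<le> (real N - 1) * (\<Sum>F\<in>T. \<Sum>G\<in>T. c F * c G * f (klab_prod j F G))
          + (\<Sum>F\<in>T. \<Sum>G\<in>T. c F * c G * f (rawU F G))} | j T c N.
          finite T \<and> T \<subseteq> {F. klabeled j F} \<and> 2 \<le> N \<and> bnd j T N \<le> m}
    \<union> {{f. f (klab_prod j F G) = f (klab_prod j G F)} | j F G.
          klabeled j F \<and> klabeled j G \<and> bnd j {F,G} 2 \<le> m}"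

lemma Cons_cases:
  assumes "S \<in> Cons k A m"
  obtains (a) G H where "S = {f. f G = f H}" "isolate_equiv G H"
   | (b) F G where "S = {f. f (flat_prod F G) = A F G}" "F \<in> flat_graphs k" "G \<in> flat_graphs k"
   | (c) j T c N where "S = {f. 0 \<le> (real N - 1) * (\<Sum>F\<in>T. \<Sum>G\<in>T. c F * c G * f (klab_prod j F G))
          + (\<Sum>F\<in>T. \<Sum>G\<in>T. c F * c G * f (rawU F G))}"
       "finite T" "T \<subseteq> {F. klabeled j F}" "2 \<le> N" "bnd j T N \<le> m"
   | (d) j F G where "S = {f. f (klab_prod j F G) = f (klab_prod j G F)}"
       "klabeled j F" "klabeled j G" "bnd j {F,G} 2 \<le> m"
  using assms unfolding Cons_def by blast

lemma ie_eq_snd: "snd G = snd H \<Longrightarrow> isolate_equiv G H"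
  using ie_refl[of G] unfolding isolate_equiv_def del_isolated_def by simp

lemma closed_D: "closed (\<Inter>(Cons k A m))"
proof (rule closed_Inter, intro ballI)
  fix S assume "S \<in> Cons k A m"
  then show "closed S"
    by (cases rule: Cons_cases) (simp_all only: closed_ii closed_A closed_rp)
qed

lemma Cons_mono: "m \<le> m' \<Longrightarrow> Cons k A m \<subseteq> Cons k A m'"
  unfolding Cons_def
  apply (intro Un_mono subset_refl)
   apply (smt (verit) Collect_mono le_trans)
  apply (smt (verit) Collect_mono le_trans)
  done

lemma add_iso_flat: "F \<in> flat_graphs k \<Longrightarrow> k \<le> m \<Longrightarrow> add_isolated m F \<in> flat_graphs m"
  unfolding flat_graphs_def add_isolated_def wf_graph_def by force

lemma fm_in_Cons:
  assumes psd: "psd_on (flat_graphs m) B" and hb: "HBc B m"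
    and ac: "\<forall>F\<in>flat_graphs k. \<forall>G\<in>flat_graphs k. B (add_isolated m F) (add_isolated m G) = A F G"
    and km: "k \<le> m" and m0: "m0 \<le> m"
  shows "fm B m \<in> \<Inter>(Cons k A m0)"
proof -
  have f1: "fm B m G = fm B m H" if "isolate_equiv G H" for G H using that by (rule fm_ie)
  have f2: "fm B m (flat_prod F G) = A F G" if F: "F \<in> flat_graphs k" and G: "G \<in> flat_graphs k" for F G
  proof -
    have X: "add_isolated m F \<in> flat_graphs m" "add_isolated m G \<in> flat_graphs m"
      using add_iso_flat F G km by auto
    have "isolate_equiv (flat_prod (add_isolated m F) (add_isolated m G)) (flat_prod F G)"
      by (rule ie_eq_snd) (simp add: flat_prod_def add_isolated_def)
    then show "fm B m (flat_prod F G) = A F G" using fm_eq[OF hb X] ac F G by simp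
  qed
  have f3: "0 \<le> (real N - 1) * (\<Sum>F\<in>T. \<Sum>G\<in>T. c F * c G * fm B m (klab_prod j F G))
          + (\<Sum>F\<in>T. \<Sum>G\<in>T. c F * c G * fm B m (rawU F G))"
    if fin: "finite T" and T: "T \<subseteq> {F. klabeled j F}" and N: "2 \<le> N" and b: "bnd j T N \<le> m0" for j T c N
  proof -
    have "\<forall>F\<in>T. \<forall>v\<in>fst F. v \<le> Mxf T" using Mxf_bound[OF fin T] by blast
    then show ?thesis
      using fm_rp[OF psd hb fin T _ N] b m0 unfolding bnd_def by simp
  qed
  have f4: "fm B m (klab_prod j F G) = fm B m (klab_prod j G F)"
    if F: "klabeled j F" and G: "klabeled j G" and b: "bnd j {F,G} 2 \<le> m0" for j F G
  proof -
    let ?T = "{F,G}"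
    have T: "?T \<subseteq> {F. klabeled j F}" using F G by auto
    have Mx: "\<forall>F\<in>?T. \<forall>v\<in>fst F. v \<le> Mxf ?T" using Mxf_bound[OF _ T] by blast
    have mm: "j + 2 + 2 * Mxf ?T \<le> m" using b m0 unfolding bnd_def by simp
    have fl: "Gs j 2 m s H \<in> flat_graphs m" if "s < 2" "H \<in> ?T" for s H
      using Gs_flat[of j H "Mxf ?T" s 2 m] that T Mx mm by auto
    have e1: "fm B m (klab_prod j F G) = B (Gs j 2 m 0 F) (Gs j 2 m 1 G)"
      using fm_eq[OF hb fl fl ie_sym[OF slot_diff[of 0 2 1 j F G m]]] by simp
    have e2: "fm B m (klab_prod j G F) = B (Gs j 2 m 1 G) (Gs j 2 m 0 F)"
      using fm_eq[OF hb fl fl ie_sym[OF slot_diff[of 1 2 0 j G F m]]] by simp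
    have "B (Gs j 2 m 0 F) (Gs j 2 m 1 G) = B (Gs j 2 m 1 G) (Gs j 2 m 0 F)"
      using psd fl unfolding psd_on_def by simp
    then show ?thesis using e1 e2 by simp
  qed
  show ?thesis
  proof (rule InterI)
    fix S assume "S \<in> Cons k A m0"
    then show "fm B m \<in> S"
    proof (cases rule: Cons_cases)
      case (a G H) then show ?thesis using f1 by simp
    next
      case (b F G) then show ?thesis using f2 by simp
    next
      case (c j T c N) then show ?thesis using f3 by simp
    next
      case (d j F G) then show ?thesis using f4 by simp
    qed
  qed
qed



lemma psd_apply: "psd_on S M \<Longrightarrow> finite T \<Longrightarrow> T \<subseteq> S \<Longrightarrow> 0 \<le> (\<Sum>x\<in>T. \<Sum>y\<in>T. c x * c y * M x y)"
  unfolding psd_on_def by blast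

lemma fm_box:
  assumes psd: "psd_on (flat_graphs m) B" and hb: "HBc B m"
    and ac: "\<forall>F\<in>flat_graphs k. \<forall>G\<in>flat_graphs k. B (add_isolated m F) (add_isolated m G) = A F G"
    and km: "k \<le> m"
  shows "fm B m x \<in> {0..A ({1..k}, {}) ({1..k}, {})}"
proof -
  let ?c = "A ({1..k}, {}) ({1..k}, {})"
  define E :: graph where "E = ({1..m}, {})"
  have E0: "({1..k}, {}) \<in> flat_graphs k" by (simp add: flat_graphs_def wf_graph_def)
  have E: "E \<in> flat_graphs m" by (simp add: E_def flat_graphs_def wf_graph_def)
  have BE: "B E E = ?c" using ac[rule_format, OF E0 E0] by (simp add: E_def add_isolated_def)
  have c0: "0 \<le> ?c"
    using psd_apply[OF psd, of "{E}" "\<lambda>_. 1"] E BE by simp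
  have W: "0 \<le> B W W \<and> B W W \<le> ?c" if Wf: "W \<in> flat_graphs m" for W
  proof
    show "0 \<le> B W W"
      using psd_apply[OF psd, of "{W}" "\<lambda>_. 1"] Wf by simp
    show "B W W \<le> ?c"
    proof (cases "W = E")
      case True then show ?thesis using BE by simp
    next
      case False
      have "flat_prod W E = W" "flat_prod W W = W"
        using Wf by (auto simp: flat_prod_def E_def)
      then have WE: "B W E = B W W" using hb Wf E ie_refl unfolding HBc_def by metis
      have EW: "B E W = B W E" using psd Wf E unfolding psd_on_def by blast
      define cf where "cf = (\<lambda>x. if x = W then (1::real) else -1)"
      have "0 \<le> (\<Sum>x\<in>{W,E}. \<Sum>y\<in>{W,E}. cf x * cf y * B x y)"
        using psd_apply[OF psd, of "{W,E}" cf] Wf E by simp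
      also have "\<dots> = B W W - B W E - B E W + B E E" using False by (simp add: cf_def)
      finally show ?thesis using WE EW BE by simp
    qed
  qed
  show ?thesis using fm_cases[of B m x] W c0 by auto
qed

lemma klab_flat: assumes "F \<in> flat_graphs m" "G \<in> flat_graphs m"
  shows "klab_prod m F G = flat_prod F G"
proof -
  have r1: "lab_ren1 m v = v" "lab_ren2 m v = v" if "v \<in> {1..m}" for v
    using that by (auto simp: lab_ren1_def lab_ren2_def)
  have i1: "lab_ren1 m ` X = X \<and> lab_ren2 m ` X = X" if "X \<subseteq> {1..m}" for X
  proof -
    have "lab_ren1 m ` X = id ` X" "lab_ren2 m ` X = id ` X"
      using that r1 by (intro image_cong; force)+
    then show ?thesis by simp
  qed
  have eF: "\<forall>e\<in>snd F. e \<subseteq> {1..m}" "\<forall>e\<in>snd G. e \<subseteq> {1..m}" and fF: "fst F = {1..m}" "fst G = {1..m}"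
    using assms unfolding flat_graphs_def wf_graph_def by blast+
  have "image (lab_ren1 m) ` snd F = id ` snd F" using eF i1 by (intro image_cong) auto
  moreover have "image (lab_ren2 m) ` snd G = id ` snd G" using eF i1 by (intro image_cong) auto
  ultimately show ?thesis using fF i1 by (simp add: klab_prod_def flat_prod_def)
qed



lemma Cons_ii: "isolate_equiv G H \<Longrightarrow> {f. f G = f H} \<in> Cons k A m"
  unfolding Cons_def by blast
lemma Cons_A: "F \<in> flat_graphs k \<Longrightarrow> G \<in> flat_graphs k \<Longrightarrow> {f. f (flat_prod F G) = A F G} \<in> Cons k A m"
  unfolding Cons_def by blast
lemma Cons_rp: "finite T \<Longrightarrow> T \<subseteq> {F. klabeled j F} \<Longrightarrow> 2 \<le> N \<Longrightarrow> bnd j T N \<le> m \<Longrightarrow>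
   {f. 0 \<le> (real N - 1) * (\<Sum>F\<in>T. \<Sum>G\<in>T. c F * c G * f (klab_prod j F G))
          + (\<Sum>F\<in>T. \<Sum>G\<in>T. c F * c G * f (rawU F G))} \<in> Cons k A m"
  unfolding Cons_def by blast
lemma Cons_sym: "klabeled j F \<Longrightarrow> klabeled j G \<Longrightarrow> bnd j {F,G} 2 \<le> m \<Longrightarrow>
   {f. f (klab_prod j F G) = f (klab_prod j G F)} \<in> Cons k A m"
  unfolding Cons_def by blast

lemma forward:
  fixes k :: nat and A :: "graph \<Rightarrow> graph \<Rightarrow> real"
  assumes gp: "graph_parameter f" and ii: "isolate_indifferent f" and rp: "reflection_positive f"
    and af: "\<forall>F\<in>flat_graphs k. \<forall>G\<in>flat_graphs k. A F G = f (flat_prod F G)"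
    and km: "k \<le> m"
  shows "\<exists>B. psd_on (flat_graphs m) B \<and>
            (\<forall>F1\<in>flat_graphs m. \<forall>G1\<in>flat_graphs m. \<forall>F2\<in>flat_graphs m. \<forall>G2\<in>flat_graphs m.
               isolate_equiv (flat_prod F1 G1) (flat_prod F2 G2) \<longrightarrow> B F1 G1 = B F2 G2) \<and>
            (\<forall>F\<in>flat_graphs k. \<forall>G\<in>flat_graphs k.
               B (add_isolated m F) (add_isolated m G) = A F G)"
proof (intro exI conjI)
  let ?B = "\<lambda>F G. f (flat_prod F G)"
  have wfp: "wf_graph (flat_prod F G)" if "F \<in> flat_graphs m" "G \<in> flat_graphs m" for F G m
    using flat_prod_flat[OF that] by (simp add: flat_graphs_def)
  have sub: "flat_graphs m \<subseteq> {F. klabeled m F}" by (auto simp: flat_graphs_def klabeled_def)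
  have P: "psd_on {F. klabeled m F} (\<lambda>F G. f (klab_prod m F G))" using rp by (simp add: reflection_positive_def)
  show "psd_on (flat_graphs m) ?B"
    unfolding psd_on_def
  proof (intro conjI ballI allI impI)
    fix x y assume xf: "x \<in> flat_graphs m" and yf: "y \<in> flat_graphs m"
    then have "klabeled m x" "klabeled m y" using sub by auto
    then have "f (klab_prod m x y) = f (klab_prod m y x)" using P unfolding psd_on_def
      by (metis (no_types, lifting) mem_Collect_eq)
    then show "?B x y = ?B y x" using klab_flat[OF xf yf] klab_flat[OF yf xf] by simp
  next
    fix T c assume T: "finite T \<and> T \<subseteq> flat_graphs m"
    have "0 \<le> (\<Sum>x\<in>T. \<Sum>y\<in>T. c x * c y * f (klab_prod m x y))"
      using psd_apply[OF P, of T c] T sub by (meson order_trans)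
    also have "\<dots> = (\<Sum>x\<in>T. \<Sum>y\<in>T. c x * c y * ?B x y)"
    proof (intro sum.cong refl)
      fix x y assume "x \<in> T" "y \<in> T"
      then have "x \<in> flat_graphs m" "y \<in> flat_graphs m" using T by auto
      then show "c x * c y * f (klab_prod m x y) = c x * c y * ?B x y" using klab_flat by simp
    qed
    finally show "0 \<le> (\<Sum>x\<in>T. \<Sum>y\<in>T. c x * c y * ?B x y)" .
  qed
  show "\<forall>F1\<in>flat_graphs m. \<forall>G1\<in>flat_graphs m. \<forall>F2\<in>flat_graphs m. \<forall>G2\<in>flat_graphs m.
               isolate_equiv (flat_prod F1 G1) (flat_prod F2 G2) \<longrightarrow> ?B F1 G1 = ?B F2 G2"
  proof (intro ballI impI)
    fix F1 G1 F2 G2 assume a: "F1 \<in> flat_graphs m" "G1 \<in> flat_graphs m" "F2 \<in> flat_graphs m" "G2 \<in> flat_graphs m"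
      and e: "isolate_equiv (flat_prod F1 G1) (flat_prod F2 G2)"
    show "?B F1 G1 = ?B F2 G2"
      using ii[unfolded isolate_indifferent_def, rule_format, OF conjI[OF wfp[OF a(1,2)] conjI[OF wfp[OF a(3,4)] e]]] .
  qed
  show "\<forall>F\<in>flat_graphs k. \<forall>G\<in>flat_graphs k. ?B (add_isolated m F) (add_isolated m G) = A F G"
  proof (intro ballI)
    fix F G assume F: "F \<in> flat_graphs k" and G: "G \<in> flat_graphs k"
    have X: "add_isolated m F \<in> flat_graphs m" "add_isolated m G \<in> flat_graphs m"
      using add_iso_flat F G km by auto
    have "isolate_equiv (flat_prod (add_isolated m F) (add_isolated m G)) (flat_prod F G)"
      by (rule ie_eq_snd) (simp add: flat_prod_def add_isolated_def)
    then have "?B (add_isolated m F) (add_isolated m G) = f (flat_prod F G)"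
      using ii[unfolded isolate_indifferent_def, rule_format, OF conjI[OF wfp[OF X] conjI[OF wfp[OF F G]]]] by simp
    then show "?B (add_isolated m F) (add_isolated m G) = A F G" using af F G by simp
  qed
qed

lemma backward:
  fixes k :: nat and A :: "graph \<Rightarrow> graph \<Rightarrow> real"
  assumes H: "\<forall>m\<ge>k. \<exists>B. psd_on (flat_graphs m) B \<and>
            (\<forall>F1\<in>flat_graphs m. \<forall>G1\<in>flat_graphs m. \<forall>F2\<in>flat_graphs m. \<forall>G2\<in>flat_graphs m.
               isolate_equiv (flat_prod F1 G1) (flat_prod F2 G2) \<longrightarrow> B F1 G1 = B F2 G2) \<and>
            (\<forall>F\<in>flat_graphs k. \<forall>G\<in>flat_graphs k.
               B (add_isolated m F) (add_isolated m G) = A F G)"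
  shows "\<exists>f. graph_parameter f \<and> isolate_indifferent f \<and> reflection_positive f \<and>
            (\<forall>F\<in>flat_graphs k. \<forall>G\<in>flat_graphs k. A F G = f (flat_prod F G))"
proof -
  define P where "P m B \<longleftrightarrow> psd_on (flat_graphs m) B \<and> HBc B m \<and>
      (\<forall>F\<in>flat_graphs k. \<forall>G\<in>flat_graphs k. B (add_isolated m F) (add_isolated m G) = A F G)" for m B
  have ex: "\<exists>B. P m B" if "k \<le> m" for m
    using H[rule_format, OF that] unfolding P_def HBc_def .
  define Bm where "Bm m = (SOME B. P m B)" for m
  have PB: "P m (Bm m)" if "k \<le> m" for m
    unfolding Bm_def using someI_ex[OF ex[OF that]] .
  define g where "g n = fm (Bm (n + k)) (n + k)" for n
  define c0 where "c0 = A ({1..k},{}) ({1..k},{})"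
  define S where "S = {f::graph\<Rightarrow>real. \<forall>x. f x \<in> {0..c0}}"
  define D where "D m = \<Inter>(Cons k A m)" for m
  have gS: "g n \<in> S" for n
  proof -
    have "P (n+k) (Bm (n+k))" by (rule PB) simp
    then show ?thesis unfolding S_def g_def c0_def P_def using fm_box[of "n+k" "Bm (n+k)" k A] by simp
  qed
  have gD: "g n \<in> D m" if "m \<le> n" for m n
  proof -
    have "P (n+k) (Bm (n+k))" by (rule PB) simp
    then show ?thesis unfolding D_def g_def P_def using fm_in_Cons[of "n+k" _ k A m] that by simp
  qed
  have "S \<inter> \<Inter>(range D) \<noteq> {}"
  proof (rule compact_imp_fip)
    show "compact S" unfolding S_def by (rule compact_box)
    show "closed T" if "T \<in> range D" for T using that closed_D unfolding D_def by auto
    fix F' assume fin: "finite F'" and sub: "F' \<subseteq> range D"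
    obtain M where M: "finite M" "F' = D ` M" using finite_subset_image[OF fin sub] by blast
    define n where "n = Max (insert 0 M)"
    have "m \<le> n" if "m \<in> M" for m unfolding n_def using M(1) that by simp
    then have "g n \<in> \<Inter>F'" using gD M(2) by blast
    then show "S \<inter> \<Inter>F' \<noteq> {}" using gS by blast
  qed
  then obtain f where fS: "f \<in> S" and fD: "\<And>m. f \<in> D m" by blast
  have mem: "f \<in> X" if "X \<in> Cons k A m" for X m using fD[of m] that unfolding D_def by blast
  have ii: "isolate_indifferent f"
    unfolding isolate_indifferent_def using mem[OF Cons_ii] by blast
  have gp: "graph_parameter f"
    unfolding graph_parameter_def using mem[OF Cons_ii[OF iso_ie]] by blast
  have af: "\<forall>F\<in>flat_graphs k. \<forall>G\<in>flat_graphs k. A F G = f (flat_prod F G)"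
    using mem[OF Cons_A] by fastforce
  have rp: "reflection_positive f"
    unfolding reflection_positive_def psd_on_def
  proof (intro allI conjI ballI impI)
    fix j x y assume "x \<in> {F. klabeled j F}" "y \<in> {F. klabeled j F}"
    then have "f \<in> {f. f (klab_prod j x y) = f (klab_prod j y x)}"
      by (intro mem[OF Cons_sym, of j x y "bnd j {x,y} 2"]) auto
    then show "f (klab_prod j x y) = f (klab_prod j y x)" by simp
  next
    fix j T c assume T: "finite T \<and> T \<subseteq> {F. klabeled j F}"
    have "\<forall>N\<ge>2. 0 \<le> (real N - 1) * (\<Sum>F\<in>T. \<Sum>G\<in>T. c F * c G * f (klab_prod j F G))
          + (\<Sum>F\<in>T. \<Sum>G\<in>T. c F * c G * f (rawU F G))"
    proof (intro allI impI)
      fix N :: nat assume "2 \<le> N"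
      then show "0 \<le> (real N - 1) * (\<Sum>F\<in>T. \<Sum>G\<in>T. c F * c G * f (klab_prod j F G))
          + (\<Sum>F\<in>T. \<Sum>G\<in>T. c F * c G * f (rawU F G))"
        using mem[OF Cons_rp[of T j N "bnd j T N" c k A]] T by simp
    qed
    then show "0 \<le> (\<Sum>x\<in>T. \<Sum>y\<in>T. c x * c y * f (klab_prod j x y))" by (rule Q_nonneg)
  qed
  show ?thesis using gp ii rp af by blast
qed

theorem mainTheorem9:
  fixes k :: nat and A :: "graph \<Rightarrow> graph \<Rightarrow> real"
  assumes "\<forall>F\<in>flat_graphs k. \<forall>G\<in>flat_graphs k. A F G = A G F"
  shows "(\<exists>f. graph_parameter f \<and> isolate_indifferent f \<and> reflection_positive f \<and>
            (\<forall>F\<in>flat_graphs k. \<forall>G\<in>flat_graphs k. A F G = f (flat_prod F G)))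
         \<longleftrightarrow>
         (\<forall>m\<ge>k. \<exists>B. psd_on (flat_graphs m) B \<and>
            (\<forall>F1\<in>flat_graphs m. \<forall>G1\<in>flat_graphs m. \<forall>F2\<in>flat_graphs m. \<forall>G2\<in>flat_graphs m.
               isolate_equiv (flat_prod F1 G1) (flat_prod F2 G2) \<longrightarrow> B F1 G1 = B F2 G2) \<and>
            (\<forall>F\<in>flat_graphs k. \<forall>G\<in>flat_graphs k.
               B (add_isolated m F) (add_isolated m G) = A F G))"
proof
  assume "\<exists>f. graph_parameter f \<and> isolate_indifferent f \<and> reflection_positive f \<and>
            (\<forall>F\<in>flat_graphs k. \<forall>G\<in>flat_graphs k. A F G = f (flat_prod F G))"
  then obtain f where "graph_parameter f" "isolate_indifferent f" "reflection_positive f"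
     "\<forall>F\<in>flat_graphs k. \<forall>G\<in>flat_graphs k. A F G = f (flat_prod F G)" by blast
  then show "\<forall>m\<ge>k. \<exists>B. psd_on (flat_graphs m) B \<and>
            (\<forall>F1\<in>flat_graphs m. \<forall>G1\<in>flat_graphs m. \<forall>F2\<in>flat_graphs m. \<forall>G2\<in>flat_graphs m.
               isolate_equiv (flat_prod F1 G1) (flat_prod F2 G2) \<longrightarrow> B F1 G1 = B F2 G2) \<and>
            (\<forall>F\<in>flat_graphs k. \<forall>G\<in>flat_graphs k.
               B (add_isolated m F) (add_isolated m G) = A F G)"
    using forward by blast
next
  assume "\<forall>m\<ge>k. \<exists>B. psd_on (flat_graphs m) B \<and>
            (\<forall>F1\<in>flat_graphs m. \<forall>G1\<in>flat_graphs m. \<forall>F2\<in>flat_graphs m. \<forall>G2\<in>flat_graphs m.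
               isolate_equiv (flat_prod F1 G1) (flat_prod F2 G2) \<longrightarrow> B F1 G1 = B F2 G2) \<and>
            (\<forall>F\<in>flat_graphs k. \<forall>G\<in>flat_graphs k.
               B (add_isolated m F) (add_isolated m G) = A F G)"
  then show "\<exists>f. graph_parameter f \<and> isolate_indifferent f \<and> reflection_positive f \<and>
            (\<forall>F\<in>flat_graphs k. \<forall>G\<in>flat_graphs k. A F G = f (flat_prod F G))"
    by (rule backward)
qed


end
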